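(* Let $\mathfrak g=so(3)\oplus A_1$ be the real Lie algebra with basis $e_1,\dots,e_4$ and nonzero brackets $[e_1,e_2]=e_3$, $[e_2,e_3]=e_1$, $[e_3,e_1]=e_2$ ($e_4$ central). For $\varepsilon\in(0,1]$ let $K=\tfrac12\sqrt{4\varepsilon^4+1}$, $\theta_\pm=\sqrt{(2K\pm1)/(4K)}$, and $$U_\varepsilon=\begin{pmatrix}0&0&\varepsilon^2&0\\0&-\varepsilon^3&0&0\\0&0&0&\varepsilon\\-\varepsilon^2&0&-1&0\end{pmatrix},\quad W_\varepsilon=\begin{pmatrix}-\theta_-&0&0&\theta_+\\0&1&0&0\\0&0&1&0\\\theta_+&0&0&\theta_-\end{pmatrix},\quad \tilde W_\varepsilon=\begin{pmatrix}-\theta_-&0&-\theta_+&0\\0&-1&0&0\\0&0&0&1\\-\theta_+&0&\theta_-&0\end{pmatrix},$$ $D_\varepsilon=\mathrm{diag}(K+\tfrac12,\varepsilon^3,\varepsilon,K-\tfrac12)$. Then: (i) $U_\varepsilon=W_\varepsilon D_\varepsilon\tilde W_\varepsilon$, the matrices $W_\varepsilon,\tilde W_\varepsilon$ are orthogonal and converge as $\varepsilon\to0^+$ to nonsingular matrices $W_0,\tilde W_0$; (ii) the matrix $U_\varepsilon$ contracts $\mathfrak g$ to the algebra $A_{4.1}$ with nonzero brackets $[e_2,e_4]=e_1$, $[e_3,e_4]=e_2$; (iii) the matrix $\tilde U_\varepsilon=W_0D_\varepsilon\tilde W_0$ contracts $\mathfrak g$ to the algebra $A_{3.1}\oplus A_1$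 with only nonzero bracket $[e_2,e_4]=e_1$, which is not isomorphic to $A_{4.1}$.
   Context: A matrix-valued continuous function $U:(0,1]\to GL_4(\mathbb R)$ contracts a Lie algebra with structure constants $c_{ij}^k$ to the algebra with structure constants $\tilde c_{i'j'}^{k'}=\lim_{\varepsilon\to0^+}(U_\varepsilon)^i_{i'}(U_\varepsilon)^j_{j'}(U_\varepsilon^{-1})^{k'}_kc^k_{ij}$ (summation convention), provided all these limits exist; equivalently the new bracket is $\lim_{\varepsilon\to0^+}U_\varepsilon^{-1}[U_\varepsilon x,U_\varepsilon y]$. *)

theory Defs
  imports "HOL-Analysis.Analysis"
begin

text \<open>Indices: the basis vectors e1,e2,e3,e4 correspond to the elements
  1,2,3,4 of the numeral type 4 (note that 4 = 0 in that type, but the four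
  elements are pairwise distinct).\<close>

definition idx4 :: "4 \<Rightarrow> nat" where
  "idx4 i = (if i = 1 then 0 else if i = 2 then 1 else if i = 3 then 2 else 3)"

definition mat4 :: "real list list \<Rightarrow> real^4^4" where
  "mat4 L = (\<chi> i j. (L ! idx4 i) ! idx4 j)"

definition diag4 :: "real \<Rightarrow> real \<Rightarrow> real \<Rightarrow> real \<Rightarrow> real^4^4" where
  "diag4 a b c d = mat4 [[a,0,0,0],[0,b,0,0],[0,0,c,0],[0,0,0,d]]"

text \<open>Structure constants c i j k = c_{ij}^k of the Lie algebra whose nonzero
  brackets are [e_i,e_j] = e_k for (i,j,k) in the list (and their antisymmetric
  counterparts).\<close>
definition sc_of :: "(4 \<times> 4 \<times> 4) list \<Rightarrow> 4 \<Rightarrow> 4 \<Rightarrow> 4 \<Rightarrow> real" where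
  "sc_of L i j k = (if (i,j,k) \<in> set L then 1 else if (j,i,k) \<in> set L then -1 else 0)"

definition so3_A1 :: "4 \<Rightarrow> 4 \<Rightarrow> 4 \<Rightarrow> real" where
  "so3_A1 = sc_of [(1,2,3),(2,3,1),(3,1,2)]"

definition A41 :: "4 \<Rightarrow> 4 \<Rightarrow> 4 \<Rightarrow> real" where
  "A41 = sc_of [(2,4,1),(3,4,2)]"

definition A31_A1 :: "4 \<Rightarrow> 4 \<Rightarrow> 4 \<Rightarrow> real" where
  "A31_A1 = sc_of [(2,4,1)]"

definition br :: "(4 \<Rightarrow> 4 \<Rightarrow> 4 \<Rightarrow> real) \<Rightarrow> real^4 \<Rightarrow> real^4 \<Rightarrow> real^4" where
  "br c x y = (\<chi> k. \<Sum>i\<in>UNIV. \<Sum>j\<in>UNIV. x$i * y$j * c i j k)"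

text \<open>U : (0,1] -> GL_4(R) continuous contracts c to c' : the transformed structure
  constants U^i_{i'} U^j_{j'} (U^{-1})^{k'}_k c_{ij}^k converge to c'_{i'j'}^{k'} as eps -> 0+.\<close>
definition contracts :: "(real \<Rightarrow> real^4^4) \<Rightarrow> (4 \<Rightarrow> 4 \<Rightarrow> 4 \<Rightarrow> real) \<Rightarrow> (4 \<Rightarrow> 4 \<Rightarrow> 4 \<Rightarrow> real) \<Rightarrow> bool" where
  "contracts U c c' \<longleftrightarrow>
     continuous_on {0<..1} U \<and> (\<forall>\<epsilon>\<in>{0<..1}. invertible (U \<epsilon>)) \<and>
     (\<forall>i' j' k'. ((\<lambda>\<epsilon>. \<Sum>i\<in>UNIV. \<Sum>j\<in>UNIV. \<Sum>k\<in>UNIV.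
          U \<epsilon> $ i $ i' * U \<epsilon> $ j $ j' * matrix_inv (U \<epsilon>) $ k' $ k * c i j k)
        \<longlongrightarrow> c' i' j' k') (at_right 0))"

definition lie_iso :: "(4 \<Rightarrow> 4 \<Rightarrow> 4 \<Rightarrow> real) \<Rightarrow> (4 \<Rightarrow> 4 \<Rightarrow> 4 \<Rightarrow> real) \<Rightarrow> bool" where
  "lie_iso c c' \<longleftrightarrow> (\<exists>P::real^4^4. invertible P \<and>
      (\<forall>x y. br c (P *v x) (P *v y) = P *v br c' x y))"

definition Kc :: "real \<Rightarrow> real" where "Kc \<epsilon> = sqrt (4 * \<epsilon>^4 + 1) / 2"
definition thetap :: "real \<Rightarrow> real" where "thetap \<epsilon> = sqrt ((2 * Kc \<epsilon> + 1) / (4 * Kc \<epsilon>))"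
definition thetam :: "real \<Rightarrow> real" where "thetam \<epsilon> = sqrt ((2 * Kc \<epsilon> - 1) / (4 * Kc \<epsilon>))"

definition Umat :: "real \<Rightarrow> real^4^4" where
  "Umat \<epsilon> = mat4 [[0,0,\<epsilon>^2,0],[0,-(\<epsilon>^3),0,0],[0,0,0,\<epsilon>],[-(\<epsilon>^2),0,-1,0]]"

definition Wmat :: "real \<Rightarrow> real^4^4" where
  "Wmat \<epsilon> = mat4 [[-thetam \<epsilon>,0,0,thetap \<epsilon>],[0,1,0,0],[0,0,1,0],[thetap \<epsilon>,0,0,thetam \<epsilon>]]"

definition Wtmat :: "real \<Rightarrow> real^4^4" where
  "Wtmat \<epsilon> = mat4 [[-thetam \<epsilon>,0,-thetap \<epsilon>,0],[0,-1,0,0],[0,0,0,1],[-thetap \<epsilon>,0,thetam \<epsilon>,0]]"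

definition Dmat :: "real \<Rightarrow> real^4^4" where
  "Dmat \<epsilon> = diag4 (Kc \<epsilon> + 1/2) (\<epsilon>^3) \<epsilon> (Kc \<epsilon> - 1/2)"

end

theory Submission imports Defs begin

lemma idx4_simps[simp]: "idx4 1 = 0" "idx4 2 = 1" "idx4 3 = 2" "idx4 4 = 3"
  by (simp_all add: idx4_def)

lemma mat4_nth[simp]: "mat4 L $ i $ j = L ! idx4 i ! idx4 j"
  by (simp add: mat4_def)

lemma Kc_ge: "Kc e \<ge> 1/2"
proof -
  have "sqrt (4*e^4+1) \<ge> 1" by simp
  thus ?thesis by (simp add: Kc_def)
qed

lemma Kc_sq: "(Kc e)^2 = e^4 + 1/4"
  by (simp add: Kc_def power_divide add_nonneg_nonneg)

lemma thm_sq: "(thetam e)^2 = (Kc e - 1/2) / (2 * Kc e)"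
proof -
  have "(2 * Kc e - 1) / (4 * Kc e) \<ge> 0" using Kc_ge[of e] by simp
  hence "(thetam e)^2 = (2 * Kc e - 1) / (4 * Kc e)" by (simp add: thetam_def)
  also have "\<dots> = (Kc e - 1/2) / (2 * Kc e)" using Kc_ge[of e] by (simp add: field_simps)
  finally show ?thesis .
qed

lemma thp_sq: "(thetap e)^2 = (Kc e + 1/2) / (2 * Kc e)"
proof -
  have "(2 * Kc e + 1) / (4 * Kc e) \<ge> 0" using Kc_ge[of e] by simp
  hence "(thetap e)^2 = (2 * Kc e + 1) / (4 * Kc e)" by (simp add: thetap_def)
  also have "\<dots> = (Kc e + 1/2) / (2 * Kc e)" using Kc_ge[of e] by (simp add: field_simps)
  finally show ?thesis .
qed

lemma thpm: "thetap e * thetam e = e^2 / (2 * Kc e)"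
proof -
  have K: "Kc e > 0" using Kc_ge[of e] by simp
  have "thetap e * thetam e = sqrt ((2 * Kc e + 1) / (4 * Kc e) * ((2 * Kc e - 1) / (4 * Kc e)))"
    by (simp only: thetap_def thetam_def real_sqrt_mult)
  also have "(2 * Kc e + 1) / (4 * Kc e) * ((2 * Kc e - 1) / (4 * Kc e)) = (e^2 / (2 * Kc e))^2"
    using K Kc_sq[of e] by (simp add: field_simps power2_eq_square) (simp add: algebra_simps power2_eq_square power4_eq_xxxx)
  also have "sqrt \<dots> = e^2 / (2 * Kc e)" using K by simp
  finally show ?thesis .
qed

lemma th_sum: "(thetap e)^2 + (thetam e)^2 = 1"
  using Kc_ge[of e] by (simp add: thp_sq thm_sq field_simps)

lemma part1: "Umat e = Wmat e ** Dmat e ** Wtmat e"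
proof -
  have K: "Kc e > 0" using Kc_ge[of e] by simp
  note a = thp_sq[of e] thm_sq[of e] thpm[of e] Kc_sq[of e]
  show ?thesis
    apply (simp add: vec_eq_iff forall_4 matrix_matrix_mult_def sum_4 Umat_def Wmat_def Wtmat_def Dmat_def diag4_def)
    using a K th_sum[of e] apply (simp add: field_simps)
    unfolding power2_eq_square apply (intro conjI) by algebra+
qed

lemma orthW: "orthogonal_matrix (Wmat e)"
  using th_sum[of e]
  by (simp add: orthogonal_matrix_def vec_eq_iff forall_4 matrix_matrix_mult_def sum_4 Wmat_def transpose_def mat_def power2_eq_square algebra_simps)

lemma orthWt: "orthogonal_matrix (Wtmat e)"
  using th_sum[of e]
  by (simp add: orthogonal_matrix_def vec_eq_iff forall_4 matrix_matrix_mult_def sum_4 Wtmat_def transpose_def mat_def power2_eq_square algebra_simps)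

lemma inv_explicit:
  fixes A B :: "real^4^4"
  assumes "A ** B = mat 1" "B ** A = mat 1"
  shows "invertible A \<and> matrix_inv A = B"
proof -
  have ex: "\<exists>A'. A ** A' = mat 1 \<and> A' ** A = mat 1" using assms by blast
  hence inv: "invertible A" by (simp add: invertible_def)
  from someI_ex[OF ex] have h: "A ** matrix_inv A = mat 1" "matrix_inv A ** A = mat 1"
    by (simp_all add: matrix_inv_def)
  have "matrix_inv A = (B ** A) ** matrix_inv A" using assms by simp
  also have "\<dots> = B" by (simp add: matrix_mul_assoc[symmetric] h)
  finally show ?thesis using inv by simp
qed

lemma Kc_cont: "continuous_on UNIV Kc"
  unfolding Kc_def by (intro continuous_intros) auto

lemma Kc_nz: "Kc x \<noteq> 0" using Kc_ge[of x] by linarith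

lemma thp_cont: "continuous_on UNIV thetap"
  unfolding thetap_def
  by (intro continuous_intros Kc_cont) (simp add: Kc_nz)

lemma thm_cont: "continuous_on UNIV thetam"
  unfolding thetam_def
  by (intro continuous_intros Kc_cont) (simp add: Kc_nz)

lemma Kc0: "Kc 0 = 1/2" by (simp add: Kc_def)

lemma at0: "continuous_on UNIV f \<Longrightarrow> (f \<longlongrightarrow> f 0) (at_right (0::real))"
  by (meson UNIV_I continuous_on_def tendsto_within_subset subset_UNIV)

lemma mat4_tendsto:
  assumes "\<forall>i j. ((\<lambda>e. L e ! idx4 i ! idx4 j) \<longlongrightarrow> M ! idx4 i ! idx4 j) F"
  shows "((\<lambda>e. mat4 (L e)) \<longlongrightarrow> mat4 M) F"
  unfolding mat4_def using assms by (intro tendsto_vec_lambda) auto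

lemma mat4_cont:
  assumes "\<forall>i j. continuous_on S (\<lambda>e. L e ! idx4 i ! idx4 j)"
  shows "continuous_on S (\<lambda>e. mat4 (L e))"
  unfolding mat4_def using assms by (intro continuous_on_vec_lambda) auto

lemma neg_lims: "((\<lambda>e. - thetam e) \<longlongrightarrow> - thetam 0) (at_right 0)"
   "((\<lambda>e. - thetap e) \<longlongrightarrow> - thetap 0) (at_right 0)"
  by (intro tendsto_minus at0 thm_cont thp_cont)+

lemma W_lim: "(Wmat \<longlongrightarrow> Wmat 0) (at_right 0)"
  unfolding Wmat_def
  by (rule mat4_tendsto) (simp add: forall_4 at0 thp_cont thm_cont neg_lims)

lemma Wt_lim: "(Wtmat \<longlongrightarrow> Wtmat 0) (at_right 0)"
  unfolding Wtmat_def
  by (rule mat4_tendsto) (simp add: forall_4 at0 thp_cont thm_cont neg_lims)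

lemma th0: "thetap 0 = 1" "thetam 0 = 0" by (simp_all add: thetap_def thetam_def Kc0)

lemma W0: "Wmat 0 = mat4 [[0,0,0,1],[0,1,0,0],[0,0,1,0],[1,0,0,0]]"
  by (simp add: Wmat_def th0)
lemma Wt0: "Wtmat 0 = mat4 [[0,0,-1,0],[0,-1,0,0],[0,0,0,1],[-1,0,0,0]]"
  by (simp add: Wtmat_def th0)

lemma W0_inv: "invertible (Wmat 0)"
  using orthW[of 0] orthogonal_matrix_def invertible_def by blast
lemma Wt0_inv: "invertible (Wtmat 0)"
  using orthWt[of 0] orthogonal_matrix_def invertible_def by blast

definition Uinv :: "real \<Rightarrow> real^4^4" where
  "Uinv e = mat4 [[-1/e^4, 0, 0, -1/e^2],[0,-1/e^3,0,0],[1/e^2,0,0,0],[0,0,1/e,0]]"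

lemma U_inv: "e \<noteq> 0 \<Longrightarrow> invertible (Umat e) \<and> matrix_inv (Umat e) = Uinv e"
  by (rule inv_explicit)
     (simp_all add: Umat_def Uinv_def vec_eq_iff forall_4 matrix_matrix_mult_def sum_4 mat_def field_simps)

lemma so3_A1_tab[simp]:
  "so3_A1 1 1 1 = 0"
  "so3_A1 1 1 2 = 0"
  "so3_A1 1 1 3 = 0"
  "so3_A1 1 1 4 = 0"
  "so3_A1 1 2 1 = 0"
  "so3_A1 1 2 2 = 0"
  "so3_A1 1 2 3 = 1"
  "so3_A1 1 2 4 = 0"
  "so3_A1 1 3 1 = 0"
  "so3_A1 1 3 2 = -1"
  "so3_A1 1 3 3 = 0"
  "so3_A1 1 3 4 = 0"
  "so3_A1 1 4 1 = 0"
  "so3_A1 1 4 2 = 0"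
  "so3_A1 1 4 3 = 0"
  "so3_A1 1 4 4 = 0"
  "so3_A1 2 1 1 = 0"
  "so3_A1 2 1 2 = 0"
  "so3_A1 2 1 3 = -1"
  "so3_A1 2 1 4 = 0"
  "so3_A1 2 2 1 = 0"
  "so3_A1 2 2 2 = 0"
  "so3_A1 2 2 3 = 0"
  "so3_A1 2 2 4 = 0"
  "so3_A1 2 3 1 = 1"
  "so3_A1 2 3 2 = 0"
  "so3_A1 2 3 3 = 0"
  "so3_A1 2 3 4 = 0"
  "so3_A1 2 4 1 = 0"
  "so3_A1 2 4 2 = 0"
  "so3_A1 2 4 3 = 0"
  "so3_A1 2 4 4 = 0"
  "so3_A1 3 1 1 = 0"
  "so3_A1 3 1 2 = 1"
  "so3_A1 3 1 3 = 0"
  "so3_A1 3 1 4 = 0"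
  "so3_A1 3 2 1 = -1"
  "so3_A1 3 2 2 = 0"
  "so3_A1 3 2 3 = 0"
  "so3_A1 3 2 4 = 0"
  "so3_A1 3 3 1 = 0"
  "so3_A1 3 3 2 = 0"
  "so3_A1 3 3 3 = 0"
  "so3_A1 3 3 4 = 0"
  "so3_A1 3 4 1 = 0"
  "so3_A1 3 4 2 = 0"
  "so3_A1 3 4 3 = 0"
  "so3_A1 3 4 4 = 0"
  "so3_A1 4 1 1 = 0"
  "so3_A1 4 1 2 = 0"
  "so3_A1 4 1 3 = 0"
  "so3_A1 4 1 4 = 0"
  "so3_A1 4 2 1 = 0"
  "so3_A1 4 2 2 = 0"
  "so3_A1 4 2 3 = 0"
  "so3_A1 4 2 4 = 0"
  "so3_A1 4 3 1 = 0"
  "so3_A1 4 3 2 = 0"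
  "so3_A1 4 3 3 = 0"
  "so3_A1 4 3 4 = 0"
  "so3_A1 4 4 1 = 0"
  "so3_A1 4 4 2 = 0"
  "so3_A1 4 4 3 = 0"
  "so3_A1 4 4 4 = 0"
  by (simp_all add: so3_A1_def sc_of_def)

lemma U_tc:
  assumes "e \<noteq> 0"
  shows "(\<Sum>i\<in>UNIV. \<Sum>j\<in>UNIV. \<Sum>k\<in>UNIV.
          Umat e $ i $ i' * Umat e $ j $ j' * matrix_inv (Umat e) $ k' $ k * so3_A1 i j k)
     = A41 i' j' k' + e^4 * sc_of [(2,3,4)] i' j' k' - e^2 * sc_of [(2,4,3)] i' j' k'"
  using exhaust_4[of i'] exhaust_4[of j'] exhaust_4[of k'] U_inv[OF assms] assms
  apply (elim disjE)
  apply (simp_all add: Umat_def Uinv_def sum_4 A41_def sc_of_def)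
  apply (simp_all add: field_simps eval_nat_numeral)
  done

definition Mt :: "real \<Rightarrow> real \<Rightarrow> real \<Rightarrow> real^4^4" where
  "Mt a b e = mat4 [[-a,0,0,0],[0,-(e^3),0,0],[0,0,0,e],[0,0,-b,0]]"

definition Mtinv :: "real \<Rightarrow> real \<Rightarrow> real \<Rightarrow> real^4^4" where
  "Mtinv a b e = mat4 [[-1/a,0,0,0],[0,-1/e^3,0,0],[0,0,0,-1/b],[0,0,1/e,0]]"

lemma Ut_eq: "Wmat 0 ** Dmat e ** Wtmat 0 = Mt (Kc e - 1/2) (Kc e + 1/2) e"
  by (simp add: W0 Wt0 Mt_def Dmat_def diag4_def vec_eq_iff forall_4 matrix_matrix_mult_def sum_4)

lemma Mt_inv: "a \<noteq> 0 \<Longrightarrow> b \<noteq> 0 \<Longrightarrow> e \<noteq> 0 \<Longrightarrow> invertible (Mt a b e) \<and> matrix_inv (Mt a b e) = Mtinv a b e"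
  by (rule inv_explicit)
     (simp_all add: Mt_def Mtinv_def vec_eq_iff forall_4 matrix_matrix_mult_def sum_4 mat_def field_simps)

lemma Mt_tc:
  assumes "a \<noteq> 0" "b \<noteq> 0" "e \<noteq> 0" "a * b = e^4"
  shows "(\<Sum>i\<in>UNIV. \<Sum>j\<in>UNIV. \<Sum>k\<in>UNIV.
          Mt a b e $ i $ i' * Mt a b e $ j $ j' * matrix_inv (Mt a b e) $ k' $ k * so3_A1 i j k)
     = b * A31_A1 i' j' k' + a * e^2 * sc_of [(1,2,4)] i' j' k' - e^2 / b * sc_of [(1,4,2)] i' j' k'"
  using exhaust_4[of i'] exhaust_4[of j'] exhaust_4[of k'] Mt_inv[OF assms(1-3)] assms
  apply (elim disjE)
  apply (simp_all add: Mt_def Mtinv_def sum_4 A31_A1_def sc_of_def)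
  apply (simp_all add: field_simps eval_nat_numeral)
  done

lemma Kc_gt: "e \<noteq> 0 \<Longrightarrow> Kc e > 1/2"
proof -
  assume "e \<noteq> 0"
  hence "4*e^4+1 > 1" by simp
  hence "sqrt (4*e^4+1) > 1" by simp
  thus ?thesis by (simp add: Kc_def)
qed

lemma Kc_prod: "(Kc e - 1/2) * (Kc e + 1/2) = e^4"
  using Kc_sq[of e] by (simp add: algebra_simps power2_eq_square)

lemma Kc_lim: "(Kc \<longlongrightarrow> 1/2) (at_right 0)"
  using at0[OF Kc_cont] Kc0 by simp

lemma Kc_cont': "continuous_on S Kc"
  using Kc_cont continuous_on_subset by blast

lemma contr_Ut: "contracts (\<lambda>e. Wmat 0 ** Dmat e ** Wtmat 0) so3_A1 A31_A1"
  unfolding contracts_def Ut_eq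
proof (intro conjI ballI allI)
  show "continuous_on {0<..1} (\<lambda>e. Mt (Kc e - 1/2) (Kc e + 1/2) e)"
    unfolding Mt_def by (rule mat4_cont) (auto simp: forall_4 intro!: continuous_intros Kc_cont')
next
  fix e :: real assume "e \<in> {0<..1}"
  hence e: "e \<noteq> 0" by simp
  have a: "Kc e - 1/2 \<noteq> 0" "Kc e + 1/2 \<noteq> 0" using Kc_gt[OF e] by auto
  show "invertible (Mt (Kc e - 1/2) (Kc e + 1/2) e)"
    using Mt_inv[OF a e] by simp
next
  fix i' j' k' :: 4
  have ev: "eventually (\<lambda>e. (Kc e + 1/2) * A31_A1 i' j' k' + (Kc e - 1/2) * e^2 * sc_of [(1,2,4)] i' j' k' - e^2 / (Kc e + 1/2) * sc_of [(1,4,2)] i' j' k' =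
     (\<Sum>i\<in>UNIV. \<Sum>j\<in>UNIV. \<Sum>k\<in>UNIV.
          Mt (Kc e - 1/2) (Kc e + 1/2) e $ i $ i' * Mt (Kc e - 1/2) (Kc e + 1/2) e $ j $ j' * matrix_inv (Mt (Kc e - 1/2) (Kc e + 1/2) e) $ k' $ k * so3_A1 i j k)) (at_right 0)"
    using eventually_at_right_less[of "0::real"]
  proof eventually_elim
    case (elim e)
    hence e: "e \<noteq> 0" by simp
    have a: "Kc e - 1/2 \<noteq> 0" "Kc e + 1/2 \<noteq> 0" using Kc_gt[OF e] by auto
    show ?case using Mt_tc[OF a e Kc_prod] by simp
  qed
  have "((\<lambda>e. (Kc e + 1/2) * A31_A1 i' j' k' + (Kc e - 1/2) * e^2 * sc_of [(1,2,4)] i' j' k' - e^2 / (Kc e + 1/2) * sc_of [(1,4,2)] i' j' k')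
      \<longlongrightarrow> (1/2 + 1/2) * A31_A1 i' j' k' + (1/2 - 1/2) * 0^2 * sc_of [(1,2,4)] i' j' k' - 0^2 / (1/2 + 1/2) * sc_of [(1,4,2)] i' j' k') (at_right 0)"
    by (intro tendsto_intros Kc_lim) auto
  hence "((\<lambda>e. (Kc e + 1/2) * A31_A1 i' j' k' + (Kc e - 1/2) * e^2 * sc_of [(1,2,4)] i' j' k' - e^2 / (Kc e + 1/2) * sc_of [(1,4,2)] i' j' k')
      \<longlongrightarrow> A31_A1 i' j' k') (at_right 0)" by simp
  from Lim_transform_eventually[OF this ev]
  show "((\<lambda>e. \<Sum>i\<in>UNIV. \<Sum>j\<in>UNIV. \<Sum>k\<in>UNIV.
          Mt (Kc e - 1/2) (Kc e + 1/2) e $ i $ i' * Mt (Kc e - 1/2) (Kc e + 1/2) e $ j $ j' * matrix_inv (Mt (Kc e - 1/2) (Kc e + 1/2) e) $ k' $ k * so3_A1 i j k)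
      \<longlongrightarrow> A31_A1 i' j' k') (at_right 0)" .
qed

lemma contr_U: "contracts Umat so3_A1 A41"
  unfolding contracts_def
proof (intro conjI ballI allI)
  show "continuous_on {0<..1} Umat"
    unfolding Umat_def by (rule mat4_cont) (auto simp: forall_4 intro!: continuous_intros)
next
  fix e :: real assume "e \<in> {0<..1}"
  thus "invertible (Umat e)" using U_inv by simp
next
  fix i' j' k' :: 4
  have ev: "eventually (\<lambda>e. A41 i' j' k' + e^4 * sc_of [(2,3,4)] i' j' k' - e^2 * sc_of [(2,4,3)] i' j' k' =
     (\<Sum>i\<in>UNIV. \<Sum>j\<in>UNIV. \<Sum>k\<in>UNIV.
          Umat e $ i $ i' * Umat e $ j $ j' * matrix_inv (Umat e) $ k' $ k * so3_A1 i j k)) (at_right 0)"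
    using eventually_at_right_less[of "0::real"]
    by eventually_elim (simp add: U_tc)
  have "((\<lambda>e. A41 i' j' k' + e^4 * sc_of [(2,3,4)] i' j' k' - e^2 * sc_of [(2,4,3)] i' j' k')
      \<longlongrightarrow> A41 i' j' k' + 0^4 * sc_of [(2,3,4)] i' j' k' - 0^2 * sc_of [(2,4,3)] i' j' k') (at_right 0)"
    by (intro tendsto_intros)
  hence "((\<lambda>e. A41 i' j' k' + e^4 * sc_of [(2,3,4)] i' j' k' - e^2 * sc_of [(2,4,3)] i' j' k')
      \<longlongrightarrow> A41 i' j' k') (at_right 0)" by simp
  from Lim_transform_eventually[OF this ev]
  show "((\<lambda>e. \<Sum>i\<in>UNIV. \<Sum>j\<in>UNIV. \<Sum>k\<in>UNIV.
          Umat e $ i $ i' * Umat e $ j $ j' * matrix_inv (Umat e) $ k' $ k * so3_A1 i j k)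
      \<longlongrightarrow> A41 i' j' k') (at_right 0)" .
qed

lemma brA31: "br A31_A1 u v = (u$2 * v$4 - u$4 * v$2) *\<^sub>R axis 1 1"
  by (simp add: br_def vec_eq_iff forall_4 sum_4 axis_def A31_A1_def sc_of_def)

lemma brA41a: "br A41 (axis 2 1) (axis 4 1) = axis 1 1"
  by (simp add: br_def vec_eq_iff forall_4 sum_4 axis_def A41_def sc_of_def)

lemma brA41b: "br A41 (axis 3 1) (axis 4 1) = axis 2 1"
  by (simp add: br_def vec_eq_iff forall_4 sum_4 axis_def A41_def sc_of_def)

lemma not_iso: "\<not> lie_iso A31_A1 A41"
proof
  assume "lie_iso A31_A1 A41"
  then obtain P :: "real^4^4" where P: "invertible P"
    and H: "\<And>x y. br A31_A1 (P *v x) (P *v y) = P *v br A41 x y"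
    unfolding lie_iso_def by blast
  obtain \<alpha> where a: "P *v axis 1 1 = \<alpha> *\<^sub>R axis 1 1"
    using H[of "axis 2 1" "axis 4 1"] brA41a brA31 by metis
  obtain \<beta> where b: "P *v axis 2 1 = \<beta> *\<^sub>R axis 1 1"
    using H[of "axis 3 1" "axis 4 1"] brA41b brA31 by metis
  have inj: "inj ((*v) P)" by (rule inj_matrix_vector_mult[OF P])
  have "P *v (\<beta> *\<^sub>R axis 1 1 - \<alpha> *\<^sub>R axis 2 1) = P *v 0"
    by (simp add: matrix_vector_mult_diff_distrib matrix_vector_mult_scaleR a b)
  hence z: "\<beta> *\<^sub>R axis 1 1 - \<alpha> *\<^sub>R axis 2 1 = (0::real^4)"
    using inj by (meson injD)
  have "(\<beta> *\<^sub>R axis 1 1 - \<alpha> *\<^sub>R axis 2 1) $ (2::4) = (0::real)" using z by simp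
  hence "\<alpha> = 0" by (simp add: axis_def)
  hence "P *v axis 1 1 = P *v 0" using a by simp
  hence "axis 1 1 = (0::real^4)" using inj by (meson injD)
  hence "axis 1 1 $ (1::4) = (0::real)" by simp
  thus False by (simp add: axis_def)
qed

theorem mainTheorem7:
  shows "(\<forall>\<epsilon>\<in>{0<..1::real}. Umat \<epsilon> = Wmat \<epsilon> ** Dmat \<epsilon> ** Wtmat \<epsilon> \<and>
            orthogonal_matrix (Wmat \<epsilon>) \<and> orthogonal_matrix (Wtmat \<epsilon>))
       \<and> (\<exists>W0 Wt0. (Wmat \<longlongrightarrow> W0) (at_right 0) \<and> (Wtmat \<longlongrightarrow> Wt0) (at_right 0) \<and>
            invertible W0 \<and> invertible Wt0 \<and>
            contracts (\<lambda>\<epsilon>. W0 ** Dmat \<epsilon> ** Wt0) so3_A1 A31_A1)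
       \<and> contracts Umat so3_A1 A41
       \<and> \<not> lie_iso A31_A1 A41"
  using part1 orthW orthWt W_lim Wt_lim W0_inv Wt0_inv contr_Ut contr_U not_iso by blast

end
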